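(* (1) If $q$ is even, then $\mathrm{Pr}(\mathrm{Fig}(T))=m_T$. (2) If $q$ is odd, then $\mathrm{Pr}(\mathrm{Fig}(T))=\{T^\phi,T^{\phi^2}\}\cup\mathcal S_{-1}\cup\bigcup\{\mathcal S_\theta:\theta\in\mathbb{F}_{q^3}^*,\ N(\theta)\text{ a nonzero square in }\mathbb{F}_q\}$. Further $|\mathrm{Pr}(\mathrm{Fig}(T))|$ equals $2+\frac{q-1}{2}(q^2+q+1)$ if $q\equiv1\pmod 4$ and $2+\frac{q+1}{2}(q^2+q+1)$ if $q\equiv3\pmod4$.
   Context: Let $q$ be a prime power, $\mathbb{F}_{q^3}^*=\mathbb{F}_{q^3}\setminus\{0\}$, $N(x)=x^{q^2+q+1}$. Points of $\mathrm{PG}(2,q^3)$ have homogeneous coordinates $(x,y,z)$ and lines $[a,b,c]$. Let $\phi$ be the collineation $(x,y,z)\mapsto(z^q,x^q,y^q)$ (on lines $[d,e,f]\mapsto[f^q,d^q,e^q]$). A point has Type II (resp. III) if its $\phi$-orbit is three collinear (resp. non-collinear) points; a line has Type III if its $\phi$-orbit is three non-concurrent lines. For a Type III point $X$, the Fig-block is $\mathrm{Fig}(X)=\mathcal E_X\cup\mathcal F_X$, where $\mathcal E_X$ is the set of Type II points on the line $X^\phi X^{\phi^2}$ and $\mathcal F_X=\{\ell^\phi\cap\ell^{\phi^2}:\ell\text{ a Type III line through }X\}$. Let $T=(0,0,1)$ (a Type III point), $T^\phi=(1,0,0)$, $T^{\phi^2}=(0,1,0)$, and $m_T=T^\phi T^{\phi^2}$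 the line $[0,0,1]$. For a point $P\neq T$, $\mathrm{Pr}(P)=TP\cap m_T$, and for a set of points not containing $T$, $\mathrm{Pr}$ is applied elementwise. For $\theta\in\mathbb{F}_{q^3}^*$, $\mathcal S_\theta=\{(x\theta,x^q,0):x\in\mathbb{F}_{q^3}^*\}$. *)

theory Defs
  imports Main "HOL-Computational_Algebra.Primes"
begin

text \<open>Points (and lines) of PG(2,F) are represented as classes of nonzero
  homogeneous coordinate triples up to nonzero scalars.\<close>

type_synonym 'a vec3 = "'a \<times> 'a \<times> 'a"

definition pt :: "'a::field vec3 \<Rightarrow> 'a vec3 set" where
  "pt v = (\<lambda>c. (c * fst v, c * fst (snd v), c * snd (snd v))) ` {c. c \<noteq> 0}"

definition points :: "'a::field vec3 set set" where
  "points = {pt v | v. v \<noteq> (0, 0, 0)}"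

abbreviation lines :: "'a::field vec3 set set" where
  "lines \<equiv> points"

definition dot3 :: "'a::field vec3 \<Rightarrow> 'a vec3 \<Rightarrow> 'a" where
  "dot3 v w = fst v * fst w + fst (snd v) * fst (snd w) + snd (snd v) * snd (snd w)"

definition incid :: "'a::field vec3 set \<Rightarrow> 'a vec3 set \<Rightarrow> bool" where
  "incid P L \<longleftrightarrow> (\<exists>v\<in>P. \<exists>w\<in>L. dot3 v w = 0)"

definition pts_on :: "'a::field vec3 set \<Rightarrow> 'a vec3 set set" where
  "pts_on L = {P \<in> points. incid P L}"

definition join :: "'a::field vec3 set \<Rightarrow> 'a vec3 set \<Rightarrow> 'a vec3 set" where
  "join P Q = (THE L. L \<in> lines \<and> incid P L \<and> incid Q L)"

definition meet :: "'a::field vec3 set \<Rightarrow> 'a vec3 set \<Rightarrow> 'a vec3 set" where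
  "meet L M = (THE P. P \<in> points \<and> incid P L \<and> incid P M)"

definition collinear :: "'a::field vec3 set set \<Rightarrow> bool" where
  "collinear S \<longleftrightarrow> (\<exists>L\<in>lines. \<forall>P\<in>S. incid P L)"

definition concurrent :: "'a::field vec3 set set \<Rightarrow> bool" where
  "concurrent S \<longleftrightarrow> (\<exists>P\<in>points. \<forall>L\<in>S. incid P L)"

text \<open>The collineation phi: (x,y,z) to (z^q,x^q,y^q); on lines [d,e,f] to
  [f^q,d^q,e^q], i.e. the same formula on coordinate classes.\<close>
definition phi :: "nat \<Rightarrow> 'a::field vec3 set \<Rightarrow> 'a vec3 set" where
  "phi q P = (\<lambda>v. (snd (snd v) ^ q, fst v ^ q, fst (snd v) ^ q)) ` P"

definition orb :: "nat \<Rightarrow> 'a::field vec3 set \<Rightarrow> 'a vec3 set set" where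
  "orb q P = {P, phi q P, phi q (phi q P)}"

definition typeII_pt :: "nat \<Rightarrow> 'a::field vec3 set \<Rightarrow> bool" where
  "typeII_pt q P \<longleftrightarrow> P \<in> points \<and> card (orb q P) = 3 \<and> collinear (orb q P)"

definition typeIII_pt :: "nat \<Rightarrow> 'a::field vec3 set \<Rightarrow> bool" where
  "typeIII_pt q P \<longleftrightarrow> P \<in> points \<and> card (orb q P) = 3 \<and> \<not> collinear (orb q P)"

definition typeIII_line :: "nat \<Rightarrow> 'a::field vec3 set \<Rightarrow> bool" where
  "typeIII_line q L \<longleftrightarrow> L \<in> lines \<and> card (orb q L) = 3 \<and> \<not> concurrent (orb q L)"

definition E_set :: "nat \<Rightarrow> 'a::field vec3 set \<Rightarrow> 'a vec3 set set" where
  "E_set q X = {P. typeII_pt q P \<and> incid P (join (phi q X) (phi q (phi q X)))}"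

definition F_set :: "nat \<Rightarrow> 'a::field vec3 set \<Rightarrow> 'a vec3 set set" where
  "F_set q X = {meet (phi q l) (phi q (phi q l)) | l. typeIII_line q l \<and> incid X l}"

definition Fig :: "nat \<Rightarrow> 'a::field vec3 set \<Rightarrow> 'a vec3 set set" where
  "Fig q X = E_set q X \<union> F_set q X"

definition Tpt :: "'a::field vec3 set" where
  "Tpt = pt (0, 0, 1)"

text \<open>m_T = T^phi T^phi^2, the line [0,0,1].\<close>
definition mT :: "'a::field vec3 set" where
  "mT = pt (0, 0, 1)"

definition Pr :: "'a::field vec3 set \<Rightarrow> 'a vec3 set" where
  "Pr P = meet (join Tpt P) mT"

definition S_theta :: "nat \<Rightarrow> 'a::field \<Rightarrow> 'a vec3 set set" where
  "S_theta q \<theta> = {pt (x * \<theta>, x ^ q, 0) | x. x \<noteq> 0}"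

definition normq :: "nat \<Rightarrow> 'a::field \<Rightarrow> 'a" where
  "normq q x = x ^ (q^2 + q + 1)"

text \<open>Nonzero square in the subfield F_q = {s. s^q = s}.\<close>
definition nz_square_Fq :: "nat \<Rightarrow> 'a::field \<Rightarrow> bool" where
  "nz_square_Fq q a \<longleftrightarrow> (\<exists>s. s ^ q = s \<and> s \<noteq> 0 \<and> a = s ^ 2)"

end

theory Submission
  imports Defs "HOL-Computational_Algebra.Polynomial"
begin

lemma fermat_field:
  fixes x :: "'a::{field,finite}"
  assumes "x \<noteq> 0"
  shows "x ^ (card (UNIV::'a set) - 1) = 1"
proof -
  let ?A = "UNIV - {0::'a}"
  have cA: "card ?A = card (UNIV::'a set) - 1" by (simp add: card_Diff_singleton)
  have bij: "bij_betw (\<lambda>y. x*y) ?A ?A"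
    unfolding bij_betw_def
  proof
    show "inj_on (\<lambda>y. x*y) ?A" using assms by (auto simp: inj_on_def)
    show "(\<lambda>y. x*y) ` ?A = ?A"
    proof (intro set_eqI iffI)
      fix y assume "y \<in> ?A"
      then have "y = x * (y / x)" "y / x \<in> ?A" using assms by auto
      then show "y \<in> (\<lambda>y. x*y) ` ?A" by blast
    qed (use assms in auto)
  qed
  have "prod (\<lambda>y. x * y) ?A = prod id ?A"
    using prod.reindex_bij_betw[OF bij, of id] by simp
  moreover have "prod (\<lambda>y. x * y) ?A = x ^ card ?A * prod id ?A"
    by (simp add: prod.distrib)
  moreover have "prod id ?A \<noteq> 0" by simp
  ultimately show ?thesis using cA by simp
qed

lemma pow_card_field:
  fixes x :: "'a::{field,finite}"
  shows "x ^ card (UNIV::'a set) = x"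
proof (cases "x = 0")
  case True then show ?thesis proof -
    have "card (UNIV::'a set) > 0" by (simp add: card_gt_0_iff)
    then show ?thesis using True by simp
  qed
next
  case False
  have "card (UNIV::'a set) = Suc (card (UNIV::'a set) - 1)" by (simp add: card_gt_0_iff)
  then have "x ^ card (UNIV::'a set) = x * x ^ (card (UNIV::'a set) - 1)" by (metis power_Suc)
  then show ?thesis using fermat_field[OF False] by simp
qed

lemma even_card_invol:
  assumes "finite A" "\<And>x. x \<in> A \<Longrightarrow> g x \<in> A" "\<And>x. x \<in> A \<Longrightarrow> g (g x) = x"
    "\<And>x. x \<in> A \<Longrightarrow> g x \<noteq> x"
  shows "even (card A)"
  using assms
proof (induction "card A" arbitrary: A rule: less_induct)
  case less
  show ?case
  proof (cases "A = {}")
    case True then show ?thesis by simp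
  next
    case False
    then obtain x where x: "x \<in> A" by auto
    let ?B = "A - {x, g x}"
    have gx: "g x \<in> A" "g x \<noteq> x" using less.prems(2)[OF x] less.prems(4)[OF x] by auto
    have cB: "card ?B = card A - 2" using less.prems(1) x gx by (simp add: card_Diff_subset)
    have "card {x, g x} = 2" using gx by simp
    moreover have "card {x, g x} \<le> card A" using less.prems(1) x gx by (intro card_mono) auto
    ultimately have cA: "card A \<ge> 2" by simp
    have "even (card ?B)"
    proof (rule less(1))
      show "card ?B < card A" using cB cA by simp
      show "finite ?B" using less.prems(1) by simp
      fix y assume y: "y \<in> ?B"
      have yA: "y \<in> A" "y \<noteq> x" "y \<noteq> g x" using y by auto
      have g1: "g y \<in> A" using less.prems(2)[OF yA(1)] .
      have g2: "g (g y) = y" using less.prems(3)[OF yA(1)] .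
      have g3: "g y \<noteq> x" using g2 yA(3) by auto
      have g4: "g y \<noteq> g x" using g2 yA(2) less.prems(3)[OF x] by metis
      show "g y \<in> ?B" using g1 g3 g4 by simp
      show "g (g y) = y" using g2 .
      show "g y \<noteq> y" using less.prems(4)[OF yA(1)] .
    qed
    moreover have "card A = card ?B + 2" using cB cA by simp
    ultimately show ?thesis by simp
  qed
qed

lemma hom_fiber:
  fixes f :: "'a::field \<Rightarrow> 'b::field"
  assumes mul: "\<And>x y. x\<in>G \<Longrightarrow> y\<in>G \<Longrightarrow> x*y \<in> G"
    and inv: "\<And>x. x\<in>G \<Longrightarrow> inverse x \<in> G" and z: "0 \<notin> G"
    and hom: "\<And>x y. x\<in>G \<Longrightarrow> y\<in>G \<Longrightarrow> f (x*y) = f x * f y"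
    and nz: "\<And>x. x\<in>G \<Longrightarrow> f x \<noteq> 0"
    and a: "a \<in> G"
  shows "card {x\<in>G. f x = f a} = card {x\<in>G. f x = 1}"
proof -
  have a0: "a \<noteq> 0" using a z by auto
  have "{x\<in>G. f x = f a} = (\<lambda>k. a*k) ` {k\<in>G. f k = 1}"
  proof (intro set_eqI iffI)
    fix x assume x: "x \<in> {x\<in>G. f x = f a}"
    let ?k = "inverse a * x"
    have kG: "?k \<in> G" using x a mul inv by auto
    have "f a * f ?k = f a" using hom[OF a kG] x a0 by (simp add: field_simps)
    then have "f ?k = 1" using nz[OF a] by simp
    moreover have "x = a * ?k" using a0 by simp
    ultimately show "x \<in> (\<lambda>k. a*k) ` {k\<in>G. f k = 1}" using kG by blast
  next
    fix x assume "x \<in> (\<lambda>k. a*k) ` {k\<in>G. f k = 1}"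
    then obtain k where "k \<in> G" "f k = 1" "x = a * k" by auto
    then show "x \<in> {x\<in>G. f x = f a}" using hom a mul by auto
  qed
  moreover have "inj_on (\<lambda>k. a*k) {k\<in>G. f k = 1}" using a0 by (auto simp: inj_on_def)
  ultimately show ?thesis by (simp add: card_image)
qed

lemma hom_card:
  fixes f :: "'a::field \<Rightarrow> 'b::field"
  assumes fin: "finite G" and mul: "\<And>x y. x\<in>G \<Longrightarrow> y\<in>G \<Longrightarrow> x*y \<in> G"
    and inv: "\<And>x. x\<in>G \<Longrightarrow> inverse x \<in> G" and z: "0 \<notin> G"
    and hom: "\<And>x y. x\<in>G \<Longrightarrow> y\<in>G \<Longrightarrow> f (x*y) = f x * f y"
    and nz: "\<And>x. x\<in>G \<Longrightarrow> f x \<noteq> 0"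
  shows "card G = card (f ` G) * card {x\<in>G. f x = 1}"
proof -
  have "card G = (\<Sum>y\<in>f ` G. card {x\<in>G. f x = y})"
    unfolding card_eq_sum by (rule sum.image_gen[OF fin])
  also have "\<dots> = (\<Sum>y\<in>f ` G. card {x\<in>G. f x = 1})"
  proof (rule sum.cong)
    fix y assume "y \<in> f ` G"
    then obtain a where "a \<in> G" "y = f a" by auto
    then show "card {x\<in>G. f x = y} = card {x\<in>G. f x = 1}"
      using hom_fiber[OF mul inv z hom nz] by blast
  qed simp
  finally show ?thesis by simp
qed

lemma roots_pow_bound:
  fixes c :: "'a::field"
  assumes "k > 0"
  shows "card {x. x ^ k = c} \<le> k"
proof -
  let ?p = "monom 1 k - [:c:]"
  have ev: "\<And>x. poly ?p x = x ^ k - c" by (simp add: poly_monom)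
  have "coeff ?p k = 1" using assms by (cases k) (auto simp: coeff_monom)
  then have p0: "?p \<noteq> 0" by (metis coeff_0 zero_neq_one)
  have dg: "degree ?p \<le> k"
    by (rule order.trans[OF degree_diff_le]) (auto simp: degree_monom_le)
  have "{x. x ^ k = c} = {x. poly ?p x = 0}" using ev by auto
  then show ?thesis using card_poly_roots_bound[OF p0] dg by simp
qed


definition cross :: "'a::field vec3 \<Rightarrow> 'a vec3 \<Rightarrow> 'a vec3" where
  "cross v w = (fst (snd v) * snd (snd w) - snd (snd v) * fst (snd w),
                snd (snd v) * fst w - fst v * snd (snd w),
                fst v * fst (snd w) - fst (snd v) * fst w)"

lemma cross_simp: "cross (a,b,c) (d,e,f) = (b*f - c*e, c*d - a*f, a*e - b*d)"
  by (simp add: cross_def)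

lemma mem_pt: "(x,y,z) \<in> pt (a,b,c) \<longleftrightarrow> (\<exists>k. k \<noteq> 0 \<and> x = k*a \<and> y = k*b \<and> z = k*c)"
  by (auto simp: pt_def)

lemma self_in_pt: "(a,b,c) \<in> pt (a,b,c)"
  unfolding mem_pt by (intro exI[of _ 1]) simp

lemma pt_scale:
  fixes a b c k :: "'a::field"
  assumes "k \<noteq> 0"
  shows "pt (k*a, k*b, k*c) = pt (a,b,c)"
proof (intro set_eqI)
  fix v :: "'a vec3"
  obtain x y z where v: "v = (x,y,z)" by (cases v) auto
  show "v \<in> pt (k*a, k*b, k*c) \<longleftrightarrow> v \<in> pt (a,b,c)"
    unfolding v mem_pt
  proof
    assume "\<exists>j. j \<noteq> 0 \<and> x = j * (k * a) \<and> y = j * (k * b) \<and> z = j * (k * c)"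
    then obtain j where "j \<noteq> 0" "x = j * (k * a)" "y = j * (k * b)" "z = j * (k * c)" by blast
    then show "\<exists>j. j \<noteq> 0 \<and> x = j * a \<and> y = j * b \<and> z = j * c"
      using assms by (intro exI[of _ "j*k"]) simp
  next
    assume "\<exists>j. j \<noteq> 0 \<and> x = j * a \<and> y = j * b \<and> z = j * c"
    then obtain j where "j \<noteq> 0" "x = j * a" "y = j * b" "z = j * c" by blast
    then show "\<exists>j. j \<noteq> 0 \<and> x = j * (k * a) \<and> y = j * (k * b) \<and> z = j * (k * c)"
      using assms by (intro exI[of _ "j/k"]) simp
  qed
qed

lemma pt_eq_iff:
  "pt (a,b,c) = pt (d,e,f) \<longleftrightarrow> (\<exists>k::'a::field. k \<noteq> 0 \<and> d = k*a \<and> e = k*b \<and> f = k*c)"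
proof
  assume "pt (a,b,c) = pt (d,e,f)"
  then have "(d,e,f) \<in> pt (a,b,c)" using self_in_pt by metis
  then show "\<exists>k. k \<noteq> 0 \<and> d = k*a \<and> e = k*b \<and> f = k*c" by (simp add: mem_pt)
next
  assume "\<exists>k. k \<noteq> 0 \<and> d = k*a \<and> e = k*b \<and> f = k*c"
  then obtain k where "k \<noteq> 0" "d = k*a" "e = k*b" "f = k*c" by blast
  then show "pt (a,b,c) = pt (d,e,f)" using pt_scale by metis
qed

lemma in_points: "pt (a,b,c) \<in> (points :: 'a::field vec3 set set) \<longleftrightarrow> (a,b,c) \<noteq> (0,0,0)"
proof
  assume "pt (a,b,c) \<in> (points :: 'a vec3 set set)"
  then obtain w :: "'a vec3" where w: "pt (a,b,c) = pt w" "w \<noteq> (0,0,0)" by (auto simp: points_def)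
  obtain d e f where "w = (d,e,f)" by (cases w) auto
  then show "(a,b,c) \<noteq> (0,0,0)" using w by (auto simp: pt_eq_iff)
qed (auto simp: points_def)

lemma points_cases:
  assumes "P \<in> (points :: 'a::field vec3 set set)"
  obtains a b c where "P = pt (a,b,c)" "(a,b,c) \<noteq> (0,0,0)"
proof -
  from assms obtain v where v: "P = pt v" "v \<noteq> (0,0,0)" by (auto simp: points_def)
  obtain a b c where "v = (a,b,c)" by (cases v) auto
  then show thesis using that v by blast
qed

lemma incid_pt: "incid (pt (a,b,c)) (pt (d,e,f)) \<longleftrightarrow> a*d + b*e + c*(f::'a::field) = 0"
proof
  assume "incid (pt (a,b,c)) (pt (d,e,f))"
  then obtain v w where v: "v \<in> pt (a,b,c)" and w: "w \<in> pt (d,e,f)" and d: "dot3 v w = 0"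
    unfolding incid_def by blast
  obtain v1 v2 v3 where vv: "v = (v1,v2,v3)" by (cases v) auto
  obtain w1 w2 w3 where ww: "w = (w1,w2,w3)" by (cases w) auto
  obtain k where k: "k \<noteq> 0" "v1 = k*a" "v2 = k*b" "v3 = k*c" using v vv mem_pt by blast
  obtain j where j: "j \<noteq> 0" "w1 = j*d" "w2 = j*e" "w3 = j*f" using w ww mem_pt by blast
  have "(k*j) * (a*d + b*e + c*f) = 0" using d k j vv ww by (simp add: dot3_def algebra_simps)
  then show "a*d + b*e + c*f = 0" using k j by simp
next
  assume "a*d + b*e + c*f = 0"
  then show "incid (pt (a,b,c)) (pt (d,e,f))" unfolding incid_def
    using self_in_pt[of a b c] self_in_pt[of d e f] by (force simp: dot3_def)
qed

lemma perp_unique: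
  fixes a b c d e f u1 u2 u3 :: "'a::field"
  assumes h1: "u1*a + u2*b + u3*c = 0" and h2: "u1*d + u2*e + u3*f = 0"
    and cr: "cross (a,b,c) (d,e,f) = (x,y,z)" and nz: "(x,y,z) \<noteq> (0,0,0)"
  shows "\<exists>k. u1 = k*x \<and> u2 = k*y \<and> u3 = k*z"
proof -
  have xyz: "x = b*f - c*e" "y = c*d - a*f" "z = a*e - b*d" using cr by (auto simp: cross_simp)
  have e1: "u1*y - u2*x = c*(u1*d + u2*e + u3*f) - f*(u1*a + u2*b + u3*c)"
    unfolding xyz by (simp add: algebra_simps)
  have e2: "u2*z - u3*y = a*(u1*d + u2*e + u3*f) - d*(u1*a + u2*b + u3*c)"
    unfolding xyz by (simp add: algebra_simps)
  have e3: "u3*x - u1*z = b*(u1*d + u2*e + u3*f) - e*(u1*a + u2*b + u3*c)"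
    unfolding xyz by (simp add: algebra_simps)
  have f1: "u1*y = u2*x" and f2: "u2*z = u3*y" and f3: "u3*x = u1*z"
    using e1 e2 e3 h1 h2 by simp_all
  show ?thesis
  proof (cases "x \<noteq> 0")
    case True
    then show ?thesis using f1 f3 by (intro exI[of _ "u1/x"]) (auto simp: field_simps)
  next
    case False
    show ?thesis
    proof (cases "y \<noteq> 0")
      case True
      then show ?thesis using f1 f2 False by (intro exI[of _ "u2/y"]) (auto simp: field_simps)
    next
      case False2: False
      then have "z \<noteq> 0" using nz False by auto
      then show ?thesis using f2 f3 False False2 by (intro exI[of _ "u3/z"]) (auto simp: field_simps)
    qed
  qed
qed

lemma join_pt:
  fixes a b c d e f :: "'a::field"
  assumes cr: "cross (a,b,c) (d,e,f) = (x,y,z)" and nz: "(x,y,z) \<noteq> (0,0,0)"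
  shows "join (pt (a,b,c)) (pt (d,e,f)) = pt (x,y,z)"
  unfolding join_def
proof (rule the_equality)
  have xyz: "x = b*f - c*e" "y = c*d - a*f" "z = a*e - b*d" using cr by (auto simp: cross_simp)
  show "pt (x,y,z) \<in> lines \<and> incid (pt (a,b,c)) (pt (x,y,z)) \<and> incid (pt (d,e,f)) (pt (x,y,z))"
    using nz unfolding in_points incid_pt xyz by (simp add: algebra_simps)
  fix L assume L: "L \<in> lines \<and> incid (pt (a,b,c)) L \<and> incid (pt (d,e,f)) L"
  then obtain u1 u2 u3 where Lu: "L = pt (u1,u2,u3)" "(u1,u2,u3) \<noteq> (0,0,0)"
    by (metis points_cases)
  have "u1*a + u2*b + u3*c = 0" "u1*d + u2*e + u3*f = 0"
    using L unfolding Lu incid_pt by (simp_all add: algebra_simps)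
  then obtain k where k: "u1 = k*x" "u2 = k*y" "u3 = k*z" using perp_unique[OF _ _ cr nz] by blast
  then have "k \<noteq> 0" using Lu by auto
  then show "L = pt (x,y,z)" unfolding Lu k by (rule pt_scale)
qed

lemma meet_pt:
  fixes a b c d e f :: "'a::field"
  assumes cr: "cross (a,b,c) (d,e,f) = (x,y,z)" and nz: "(x,y,z) \<noteq> (0,0,0)"
  shows "meet (pt (a,b,c)) (pt (d,e,f)) = pt (x,y,z)"
  unfolding meet_def
proof (rule the_equality)
  have xyz: "x = b*f - c*e" "y = c*d - a*f" "z = a*e - b*d" using cr by (auto simp: cross_simp)
  show "pt (x,y,z) \<in> points \<and> incid (pt (x,y,z)) (pt (a,b,c)) \<and> incid (pt (x,y,z)) (pt (d,e,f))"
    using nz unfolding in_points incid_pt xyz by (simp add: algebra_simps)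
  fix L assume L: "L \<in> points \<and> incid L (pt (a,b,c)) \<and> incid L (pt (d,e,f))"
  then obtain u1 u2 u3 where Lu: "L = pt (u1,u2,u3)" "(u1,u2,u3) \<noteq> (0,0,0)"
    by (metis points_cases)
  have "u1*a + u2*b + u3*c = 0" "u1*d + u2*e + u3*f = 0"
    using L unfolding Lu incid_pt by (simp_all add: algebra_simps)
  then obtain k where k: "u1 = k*x" "u2 = k*y" "u3 = k*z" using perp_unique[OF _ _ cr nz] by blast
  then have "k \<noteq> 0" using Lu by auto
  then show "L = pt (x,y,z)" unfolding Lu k by (rule pt_scale)
qed

lemma phi_pt:
  fixes a b c :: "'a::field"
  assumes frob: "\<And>x::'a. x ^ (q^3) = x"
  shows "phi q (pt (a,b,c)) = pt (c^q, a^q, b^q)"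
proof (intro set_eqI)
  fix v :: "'a vec3"
  obtain x y z where v: "v = (x,y,z)" by (cases v) auto
  have "v \<in> phi q (pt (a,b,c)) \<longleftrightarrow> (\<exists>k::'a. k \<noteq> 0 \<and> v = ((k*c)^q, (k*a)^q, (k*b)^q))"
  proof -
    have "phi q (pt (a,b,c)) = (\<lambda>k. ((k*c)^q, (k*a)^q, (k*b)^q)) ` {k. k\<noteq>0}"
      unfolding phi_def pt_def image_image by (simp add: mult.commute)
    then show ?thesis by auto
  qed
  also have "\<dots> \<longleftrightarrow> (\<exists>k::'a. k \<noteq> 0 \<and> x = k*c^q \<and> y = k*a^q \<and> z = k*b^q)"
  proof
    assume "\<exists>k::'a. k \<noteq> 0 \<and> v = ((k*c)^q, (k*a)^q, (k*b)^q)"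
    then obtain k where "k \<noteq> 0" "v = ((k*c)^q, (k*a)^q, (k*b)^q)" by blast
    then show "\<exists>k::'a. k \<noteq> 0 \<and> x = k*c^q \<and> y = k*a^q \<and> z = k*b^q"
      using v by (intro exI[of _ "k^q"]) (simp add: power_mult_distrib)
  next
    assume "\<exists>k::'a. k \<noteq> 0 \<and> x = k*c^q \<and> y = k*a^q \<and> z = k*b^q"
    then obtain k where k: "k \<noteq> 0" "x = k*c^q" "y = k*a^q" "z = k*b^q" by blast
    have kk: "(k^(q^2))^q = k" using frob[of k] by (simp add: power_mult[symmetric] power2_eq_square power3_eq_cube mult.commute)
    have "k^(q^2) \<noteq> 0" using k by simp
    then show "\<exists>k::'a. k \<noteq> 0 \<and> v = ((k*c)^q, (k*a)^q, (k*b)^q)"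
      using k v kk by (intro exI[of _ "k^(q^2)"]) (simp add: power_mult_distrib)
  qed
  also have "\<dots> \<longleftrightarrow> v \<in> pt (c^q, a^q, b^q)" unfolding v mem_pt by simp
  finally show "v \<in> phi q (pt (a,b,c)) \<longleftrightarrow> v \<in> pt (c^q, a^q, b^q)" .
qed


lemma normq_eq: "normq q (t::'a::field) = t * t^q * (t^q)^q"
  by (simp add: normq_def power_add power_mult[symmetric] power2_eq_square mult.commute mult.left_commute)

lemma incid_sym:
  assumes "P \<in> (points :: 'a::field vec3 set set)" "L \<in> points"
  shows "incid P L \<longleftrightarrow> incid L P"
proof -
  obtain a b c where P: "P = pt (a,b,c)" using assms(1) points_cases by metis
  obtain d e f where L: "L = pt (d,e,f)" using assms(2) points_cases by metis
  show ?thesis unfolding P L incid_pt by (simp add: mult.commute)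
qed

lemma concurrent_collinear:
  assumes "S \<subseteq> (points :: 'a::field vec3 set set)"
  shows "concurrent S \<longleftrightarrow> collinear S"
  unfolding concurrent_def collinear_def using assms incid_sym by blast

lemma pt_nz_points: "(a,b,c) \<noteq> (0,0,0) \<Longrightarrow> pt (a,b,c) \<in> (points :: 'a::field vec3 set set)"
  by (simp add: in_points)

lemma collinear_s:
  fixes s :: "'a::field"
  shows "collinear {pt (s,1,0), pt (0,s^q,1), pt (1,0,(s^q)^q)} \<longleftrightarrow> s * s^q * (s^q)^q = -1"
proof
  assume "collinear {pt (s,1,0), pt (0,s^q,1), pt (1,0,(s^q)^q)}"
  then obtain L where L: "L \<in> lines" "incid (pt (s,1,0)) L" "incid (pt (0,s^q,1)) L"
    "incid (pt (1,0,(s^q)^q)) L" unfolding collinear_def by auto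
  then obtain a b c where Lp: "L = pt (a,b,c)" "(a,b,c) \<noteq> (0,0,0)" by (metis points_cases)
  have e: "s*a + b = 0" "s^q*b + c = 0" "a + (s^q)^q * c = 0"
    using L(2-4) unfolding Lp incid_pt by simp_all
  have b: "b = -(s*a)" using e(1) add_eq_0_iff by blast
  have c0: "c = -(s^q*b)" using e(2) add_eq_0_iff by blast
  have c: "c = s^q*s*a" using c0 b by simp
  have "a * (1 + s * s^q * (s^q)^q) = 0" using e(3) c by (simp add: algebra_simps)
  moreover have "a \<noteq> 0" using Lp(2) b c by auto
  ultimately have "1 + s * s^q * (s^q)^q = 0" by simp
  then show "s * s^q * (s^q)^q = -1" using add_eq_0_iff by blast
next
  assume N: "s * s^q * (s^q)^q = -1"
  have "pt (1, -s, s*s^q) \<in> lines" by (simp add: in_points)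
  moreover have "incid (pt (s,1,0)) (pt (1, -s, s*s^q))" "incid (pt (0,s^q,1)) (pt (1, -s, s*s^q))"
     "incid (pt (1,0,(s^q)^q)) (pt (1, -s, s*s^q))"
    unfolding incid_pt using N by (simp_all add: algebra_simps)
  ultimately show "collinear {pt (s,1,0), pt (0,s^q,1), pt (1,0,(s^q)^q)}"
    unfolding collinear_def by blast
qed

lemma not_collinear_std:
  "\<not> collinear {pt (1,0,0), pt (0,1,0), pt (0,0,1::'a::field)}"
proof
  assume "collinear {pt (1,0,0), pt (0,1,0), pt (0,0,1::'a::field)}"
  then obtain L :: "'a vec3 set" where L: "L \<in> lines" "incid (pt (1,0,0)) L" "incid (pt (0,1,0)) L"
    "incid (pt (0,0,1)) L" unfolding collinear_def by auto
  then obtain a b c where Lp: "L = pt (a,b,c)" "(a,b,c) \<noteq> (0,0,0)" by (metis points_cases)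
  show False using L(2-4) Lp(2) unfolding Lp incid_pt by simp
qed

lemma card3_s:
  fixes s :: "'a::field"
  shows "card {pt (s,1,0), pt (0,s^q,1), pt (1,0,(s^q)^q)} = 3"
  by (simp add: pt_eq_iff)

lemma card3_std: "card {pt (1,0,0), pt (0,1,0), pt (0,0,1::'a::field)} = 3"
  by (simp add: pt_eq_iff)

context
  fixes q :: nat
  assumes q0: "q > 0" and frob: "\<And>x::'a::field. x ^ (q^3) = x"
begin

lemma zq: "(0::'a)^q = 0" using q0 by simp

lemma orb_s: "orb q (pt (s,1,0::'a)) = {pt (s,1,0), pt (0,s^q,1), pt (1,0,(s^q)^q)}"
  unfolding orb_def by (simp add: phi_pt[OF frob] zq)

lemma orb_std: "orb q (pt (1,0,0::'a)) = {pt (1,0,0), pt (0,1,0), pt (0,0,1)}"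
  unfolding orb_def by (simp add: phi_pt[OF frob] zq)

lemma typeII_s: "typeII_pt q (pt (s,1,0::'a)) \<longleftrightarrow> normq q s = -1"
  unfolding typeII_pt_def orb_s card3_s collinear_s normq_eq by (simp add: in_points)

lemma typeII_std: "\<not> typeII_pt q (pt (1,0,0::'a))"
  unfolding typeII_pt_def orb_std using not_collinear_std by blast

lemma typeIII_line_s: "typeIII_line q (pt (s,1,0::'a)) \<longleftrightarrow> normq q s \<noteq> -1"
proof -
  have sub: "{pt (s,1,0), pt (0,s^q,1), pt (1,0,(s^q)^q)} \<subseteq> (points :: 'a vec3 set set)"
    by (simp add: in_points)
  show ?thesis
    unfolding typeIII_line_def orb_s card3_s concurrent_collinear[OF sub] collinear_s normq_eq
    by (simp add: in_points)
qed

lemma typeIII_line_std: "typeIII_line q (pt (1,0,0::'a))"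
proof -
  have sub: "{pt (1,0,0), pt (0,1,0), pt (0,0,1)} \<subseteq> (points :: 'a vec3 set set)"
    by (simp add: in_points)
  show ?thesis
    unfolding typeIII_line_def orb_std card3_std concurrent_collinear[OF sub]
    using not_collinear_std by (simp add: in_points)
qed

lemma phiT: "phi q (Tpt::'a vec3 set) = pt (1,0,0)" "phi q (phi q (Tpt::'a vec3 set)) = pt (0,1,0)"
  unfolding Tpt_def by (simp_all add: phi_pt[OF frob] zq)

end

lemma z0_cases:
  fixes a b :: "'a::field"
  assumes "(a,b,0) \<noteq> (0,0,0)"
  shows "pt (a,b,0) = pt (1,0,0) \<or> (\<exists>t. pt (a,b,0) = pt (t,1,0))"
proof (cases "b = 0")
  case True
  then have "a \<noteq> 0" using assms by auto
  then have "pt (a*1, a*0, a*0) = pt (1,0,0)" by (rule pt_scale)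
  then show ?thesis using True by simp
next
  case False
  then have "pt (b*(a/b), b*1, b*0) = pt (a/b,1,0)" by (intro pt_scale)
  then show ?thesis using False by auto
qed

lemma on_mT:
  assumes "P \<in> (points :: 'a::field vec3 set set)" "incid P (pt (0,0,1))"
  shows "P = pt (1,0,0) \<or> (\<exists>t. P = pt (t,1,0))"
proof -
  obtain a b c where P: "P = pt (a,b,c)" "(a,b,c) \<noteq> (0,0,0)" using assms(1) points_cases by metis
  have "c = 0" using assms(2) unfolding P incid_pt by simp
  then show ?thesis using z0_cases[of a b] P by auto
qed

lemma through_T:
  assumes "L \<in> (points :: 'a::field vec3 set set)" "incid (pt (0,0,1)) L"
  shows "L = pt (1,0,0) \<or> (\<exists>t. L = pt (t,1,0))"
proof -
  obtain a b c where P: "L = pt (a,b,c)" "(a,b,c) \<noteq> (0,0,0)" using assms(1) points_cases by metis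
  have "c = 0" using assms(2) unfolding P incid_pt by simp
  then show ?thesis using z0_cases[of a b] P by auto
qed

lemma Pr_pt:
  fixes x y z :: "'a::field"
  assumes "(x,y) \<noteq> (0,0)"
  shows "Pr (pt (x,y,z)) = pt (x,y,0)"
proof -
  have "join Tpt (pt (x,y,z)) = pt (-y, x, 0)"
    unfolding Tpt_def by (rule join_pt) (use assms in \<open>auto simp: cross_simp\<close>)
  moreover have "meet (pt (-y, x, 0)) mT = pt (x,y,0)"
    unfolding mT_def by (rule meet_pt) (use assms in \<open>auto simp: cross_simp\<close>)
  ultimately show ?thesis unfolding Pr_def by simp
qed


lemma meet_std: "meet (pt (0,1,0)) (pt (0,0,1)) = (pt (1,0,0) :: 'a::field vec3 set)"
  by (rule meet_pt) (auto simp: cross_simp)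

lemma meet_s: "meet (pt (0,A,1)) (pt (1,0,D)) = (pt (A*D,1,-A) :: 'a::field vec3 set)"
  by (rule meet_pt) (auto simp: cross_simp)

lemma Pr_t: "Pr (pt (t,1,z)) = (pt (t,1,0) :: 'a::field vec3 set)"
  by (rule Pr_pt) simp

lemma Pr_img: "Pr ` {pt (f t,1,g t) | t. P t} = {pt (f t,1,0::'a::field) | t. P t}"
proof -
  have a: "{pt (f t,1,g t) | t. P t} = (\<lambda>t. pt (f t,1,g t)) ` {t. P t}" by auto
  have b: "{pt (f t,1,0::'a) | t. P t} = (\<lambda>t. pt (f t,1,0)) ` {t. P t}" by auto
  show ?thesis unfolding a b image_image Pr_t ..
qed

lemma Pr_100: "Pr (pt (1,0,0)) = (pt (1,0,0) :: 'a::field vec3 set)"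
  by (rule Pr_pt) simp

context
  fixes q :: nat
  assumes q0: "q > 0" and frob: "\<And>x::'a::field. x ^ (q^3) = x"
begin

lemma zq': "(0::'a)^q = 0" using q0 by simp

lemma join_T: "join (phi q Tpt) (phi q (phi q Tpt)) = (pt (0,0,1) :: 'a vec3 set)"
proof -
  have "join (pt (1,0,0)) (pt (0,1,0)) = (pt (0,0,1) :: 'a vec3 set)"
    by (rule join_pt) (auto simp: cross_simp)
  then show ?thesis using phiT[OF q0 frob] by simp
qed

lemma E_T: "E_set q (Tpt::'a vec3 set) = {pt (t,1,0) | t. normq q t = -1}"
proof (intro set_eqI iffI)
  fix P :: "'a vec3 set"
  assume "P \<in> E_set q Tpt"
  then have P: "typeII_pt q P" "incid P (pt (0,0,1))" unfolding E_set_def join_T by auto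
  have "P \<in> points" using P(1) typeII_pt_def by blast
  then have "P = pt (1,0,0) \<or> (\<exists>t. P = pt (t,1,0))" using on_mT P(2) by blast
  then show "P \<in> {pt (t,1,0) | t. normq q t = -1}"
    using P(1) typeII_std[OF q0 frob] typeII_s[OF q0 frob] by auto
next
  fix P :: "'a vec3 set"
  assume "P \<in> {pt (t,1,0) | t. normq q t = -1}"
  then obtain t where t: "P = pt (t,1,0)" "normq q t = -1" by auto
  have "typeII_pt q P" using t typeII_s[OF q0 frob] by simp
  moreover have "incid P (pt (0,0,1))" unfolding t incid_pt by simp
  ultimately show "P \<in> E_set q Tpt" unfolding E_set_def join_T by auto
qed

lemma phi_s1: "phi q (pt (s,1,0::'a)) = pt (0,s^q,1)" 
  by (simp add: phi_pt[OF frob] zq')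

lemma phi_s2: "phi q (pt (0,s^q,1::'a)) = pt (1,0,(s^q)^q)" 
  by (simp add: phi_pt[OF frob] zq')

lemma phi_std: "phi q (pt (1,0,0::'a)) = pt (0,1,0)" "phi q (pt (0,1,0::'a)) = pt (0,0,1)"
  by (simp_all add: phi_pt[OF frob] zq')

lemma F_T: "F_set q (Tpt::'a vec3 set) =
   {pt (1,0,0)} \<union> {pt (s^q*(s^q)^q, 1, -(s^q)) | s. normq q s \<noteq> -1}"
proof (intro set_eqI iffI)
  fix P :: "'a vec3 set"
  assume "P \<in> F_set q Tpt"
  then obtain l where l: "P = meet (phi q l) (phi q (phi q l))" "typeIII_line q l" "incid Tpt l"
    unfolding F_set_def by auto
  have "l \<in> points" using l(2) typeIII_line_def by blast
  then have "l = pt (1,0,0) \<or> (\<exists>t. l = pt (t,1,0))" using through_T l(3) unfolding Tpt_def by blast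
  then show "P \<in> {pt (1,0,0)} \<union> {pt (s^q*(s^q)^q, 1, -(s^q)) | s. normq q s \<noteq> -1}"
  proof
    assume "l = pt (1,0,0)"
    then show ?thesis using l(1) by (simp add: phi_std meet_std)
  next
    assume "\<exists>t. l = pt (t,1,0)"
    then obtain s where s: "l = pt (s,1,0)" by blast
    have "normq q s \<noteq> -1" using l(2) s typeIII_line_s[OF q0 frob] by simp
    then show ?thesis using l(1) s by (auto simp: phi_s1 phi_s2 meet_s)
  qed
next
  fix P :: "'a vec3 set"
  assume "P \<in> {pt (1,0,0)} \<union> {pt (s^q*(s^q)^q, 1, -(s^q)) | s. normq q s \<noteq> -1}"
  then show "P \<in> F_set q Tpt"
  proof
    assume "P \<in> {pt (1,0,0)}"
    then have "P = meet (phi q (pt (1,0,0))) (phi q (phi q (pt (1,0,0))))"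
      by (simp add: phi_std meet_std)
    moreover have "incid Tpt (pt (1,0,0::'a))" unfolding Tpt_def incid_pt by simp
    ultimately show ?thesis unfolding F_set_def using typeIII_line_std[OF q0 frob] by blast
  next
    assume "P \<in> {pt (s^q*(s^q)^q, 1, -(s^q)) | s. normq q s \<noteq> -1}"
    then obtain s where s: "P = pt (s^q*(s^q)^q, 1, -(s^q))" "normq q s \<noteq> -1" by blast
    then have "P = meet (phi q (pt (s,1,0))) (phi q (phi q (pt (s,1,0))))"
      by (simp add: phi_s1 phi_s2 meet_s)
    moreover have "incid Tpt (pt (s,1,0::'a))" unfolding Tpt_def incid_pt by simp
    moreover have "typeIII_line q (pt (s,1,0::'a))" using s(2) typeIII_line_s[OF q0 frob] by simp
    ultimately show ?thesis unfolding F_set_def by blast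
  qed
qed

lemma Pr_Fig: "Pr ` Fig q (Tpt::'a vec3 set) =
  {pt (1,0,0)} \<union> {pt (t,1,0) | t. normq q t = -1} \<union> {pt (s^q*(s^q)^q, 1, 0) | s. normq q s \<noteq> -1}"
proof -
  have 1: "Pr ` {pt (t,1,0) | t. normq q t = -1} = {pt (t,1,0::'a) | t. normq q t = -1}"
    by (rule Pr_img)
  have 2: "Pr ` {pt (s^q*(s^q)^q, 1, -(s^q)) | s. normq q s \<noteq> -1} =
      {pt (s^q*(s^q)^q, 1, 0::'a) | s. normq q s \<noteq> -1}"
    by (rule Pr_img)
  show ?thesis unfolding Fig_def E_T F_T image_Un 1 2 by (auto simp: Pr_100)
qed

end



lemma pow_comm: "((x::'a::monoid_mult)^m)^n = (x^n)^m"
  by (simp add: power_mult[symmetric] mult.commute)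

lemma nat_prod_eq:
  fixes a b A B :: nat
  assumes "a \<le> A" "b \<le> B" "a * b = A * B" "A > 0" "B > 0"
  shows "a = A \<and> b = B"
proof -
  have "a * b \<le> a * B" using assms(2) by simp
  moreover have "a * B \<le> A * B" using assms(1) by simp
  ultimately have "a * B = A * B" using assms(3) by linarith
  then have aA: "a = A" using assms(5) by simp
  then have "A * b = A * B" using assms(3) by simp
  then show ?thesis using aA assms(4) by simp
qed

lemma char2_iff:
  assumes "card (UNIV::'a::{field,finite} set) = q^3"
  shows "odd q \<longleftrightarrow> (2::'a) \<noteq> 0"
proof
  assume "odd q"
  show "(2::'a) \<noteq> 0"
  proof
    assume two: "(2::'a) = 0"
    have "even (card (UNIV::'a set))"
    proof (rule even_card_invol[where g="\<lambda>x. x + 1"])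
      fix x :: 'a
      have "x + 1 + 1 = x + 2" by (simp add: add.assoc)
      then show "x + 1 + 1 = x" using two by simp
      show "x + 1 \<noteq> x" by simp
    qed auto
    then have "even (q^3)" using assms by simp
    then show False using \<open>odd q\<close> by simp
  qed
next
  assume two: "(2::'a) \<noteq> 0"
  have "even (card (UNIV - {0::'a}))"
  proof (rule even_card_invol[where g="uminus"])
    fix x :: 'a assume x: "x \<in> UNIV - {0}"
    show "- x \<noteq> x"
    proof
      assume h: "- x = x"
      have "x + x = -x + x" using h by simp
      also have "\<dots> = 0" by simp
      finally have "x + x = 0" .
      then have "2 * x = 0" by (simp only: mult_2)
      then show False using two x by simp
    qed
  qed auto
  moreover have "card (UNIV - {0::'a}) = card (UNIV::'a set) - 1" by (simp add: card_Diff_singleton)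
  ultimately have ev: "even (q^3 - 1)" using assms by simp
  have "card (UNIV::'a set) > 0" by (simp add: card_gt_0_iff)
  then obtain k where k: "q^3 = Suc k" using assms gr0_conv_Suc by metis
  then have "odd (q^3)" using ev by simp
  then show "odd q" by simp
qed

context
  fixes q :: nat
  assumes q1: "q > 1" and cardU: "card (UNIV::'a::{field,finite} set) = q^3"
begin

lemma frobA: "(x::'a) ^ (q^3) = x"
  using pow_card_field[of x] cardU by simp

lemma frob3: "(((x::'a)^q)^q)^q = x"
  using frobA[of x] by (simp add: power_mult[symmetric] power3_eq_cube mult.assoc)

lemma N_mult: "normq q ((x::'a)*y) = normq q x * normq q y"
  by (simp add: normq_def power_mult_distrib)

lemma N_div: "normq q ((x::'a)/y) = normq q x / normq q y"
  by (simp add: normq_def power_divide)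

lemma N_zero_iff: "normq q (x::'a) = 0 \<longleftrightarrow> x = 0"
  by (auto simp: normq_def)

lemma N_zero: "normq q (0::'a) = 0"
  by (simp add: normq_def)

lemma N_pow: "normq q ((x::'a)^q) = (normq q x)^q"
  unfolding normq_def by (rule pow_comm)

lemma N_frob: "(normq q (x::'a))^q = normq q x"
  by (simp add: normq_eq power_mult_distrib frob3 mult.commute mult.left_commute)

lemma N_Fq: "(c::'a)^q = c \<Longrightarrow> normq q c = c^3"
  by (simp add: normq_eq power3_eq_cube)

lemma N_sq_form: "(x::'a) \<noteq> 0 \<Longrightarrow> x^q * (x^q)^q = normq q x / x"
  by (simp add: normq_eq)

definition Fq :: "'a set" where "Fq = {c. c \<noteq> 0 \<and> c^q = c}"
definition U :: "'a set" where "U = {u. normq q u = 1}"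
definition G :: "'a set" where "G = UNIV - {0}"

lemma cardG: "card G = q^3 - 1"
  unfolding G_def using cardU by (simp add: card_Diff_singleton)

lemma Fq_bound: "card Fq \<le> q - 1"
proof -
  have "Fq \<subseteq> {x. x^(q-1) = 1}"
  proof
    fix c assume "c \<in> Fq"
    then have c: "c \<noteq> 0" "c^q = c" unfolding Fq_def by auto
    obtain m where m: "q = Suc m" using q1 gr0_conv_Suc by (metis less_trans zero_less_one)
    then have "c^q = c * c^(q-1)" by simp
    then have "c * c^(q-1) = c * 1" using c by simp
    then show "c \<in> {x. x^(q-1) = 1}" using c(1) by simp
  qed
  then have "card Fq \<le> card {x::'a. x^(q-1) = 1}" by (intro card_mono) auto
  also have "\<dots> \<le> q - 1" using q1 by (intro roots_pow_bound) simp
  finally show ?thesis .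
qed

lemma U_bound: "card U \<le> q^2 + q + 1"
  unfolding U_def normq_def by (rule roots_pow_bound) simp

definition fh :: "'a \<Rightarrow> 'a" where "fh x = x / x^q"

lemma G_facts:
  "\<And>x y. x\<in>G \<Longrightarrow> y\<in>G \<Longrightarrow> x*y \<in> G" "\<And>x. x\<in>G \<Longrightarrow> inverse x \<in> G" "0 \<notin> G"
  unfolding G_def by auto

lemma fh_hom: "fh (x*y) = fh x * fh y"
  unfolding fh_def by (simp add: power_mult_distrib)

lemma fh_ker: "{x\<in>G. fh x = 1} = Fq"
  unfolding fh_def G_def Fq_def by (auto simp: divide_eq_1_iff)

lemma fh_U: "fh ` G \<subseteq> U"
proof
  fix y assume "y \<in> fh ` G"
  then obtain x where x: "x \<noteq> 0" "y = x / x^q" unfolding G_def fh_def by auto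
  have "normq q y = normq q x / normq q x" using x by (simp add: N_div N_pow N_frob)
  then show "y \<in> U" unfolding U_def using x(1) N_zero_iff by simp
qed

lemma big_count: "card Fq = q - 1 \<and> fh ` G = U \<and> card U = q^2 + q + 1"
proof -
  have e: "card G = card (fh ` G) * card {x\<in>G. fh x = 1}"
    by (rule hom_card[OF _ G_facts]) (auto simp: G_def fh_def power_mult_distrib)
  have "(q^2+q+1) * (q - 1) = q^3 - 1"
    using q1 by (simp add: power2_eq_square power3_eq_cube algebra_simps diff_mult_distrib2)
  then have e2: "card (fh ` G) * card Fq = (q^2+q+1) * (q - 1)" using e cardG fh_ker by simp
  have le: "card (fh ` G) \<le> q^2+q+1" using card_mono[of U "fh ` G"] fh_U U_bound by simp
  have r: "card (fh ` G) = q^2+q+1 \<and> card Fq = q - 1"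
    by (rule nat_prod_eq[OF le Fq_bound e2]) (use q1 in auto)
  have "card U \<le> card (fh ` G)" using r U_bound by simp
  then have "card (fh ` G) = card U" using card_mono[of U "fh ` G"] fh_U by simp
  then have "fh ` G = U" using fh_U by (intro card_subset_eq) auto
  then show ?thesis using r by simp
qed

lemma N_onto: "normq q ` G = Fq"
proof -
  have e: "card G = card (normq q ` G) * card {x\<in>G. normq q x = 1}"
    by (rule hom_card[OF _ G_facts]) (auto simp: G_def N_mult N_zero_iff N_zero)
  have k: "{x\<in>G. normq q x = 1} = U" unfolding G_def U_def by (auto simp: N_zero_iff N_zero)
  have sub: "normq q ` G \<subseteq> Fq" unfolding G_def Fq_def by (auto simp: N_zero_iff N_frob)
  have "(q^2+q+1) * (q - 1) = q^3 - 1"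
    using q1 by (simp add: power2_eq_square power3_eq_cube algebra_simps diff_mult_distrib2)
  then have h: "card (normq q ` G) * (q^2+q+1) = card Fq * (q^2+q+1)"
    using e k cardG big_count by (simp add: mult.commute)
  have M: "q^2+q+1 \<noteq> 0" by simp
  have "card (normq q ` G) = card Fq" using mult_right_cancel[OF M] h by blast
  then show ?thesis using sub by (intro card_subset_eq) auto
qed

lemma N_fiber: "c \<in> Fq \<Longrightarrow> card {t::'a. normq q t = c} = q^2 + q + 1"
proof -
  assume c: "c \<in> Fq"
  then obtain a where a: "a \<in> G" "c = normq q a" using N_onto by auto
  have c0: "c \<noteq> 0" using c Fq_def by auto
  have "{t. normq q t = c} = {x\<in>G. normq q x = normq q a}" using a c0 unfolding G_def
    by (auto simp: N_zero_iff N_zero)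
  also have "card \<dots> = card {x\<in>G. normq q x = 1}"
    by (rule hom_fiber[OF G_facts _ _ a(1)]) (auto simp: G_def N_mult N_zero_iff N_zero)
  also have "{x\<in>G. normq q x = 1} = U" unfolding G_def U_def by (auto simp: N_zero_iff N_zero)
  finally show ?thesis using big_count by simp
qed

lemma S_theta_eq:
  assumes th: "(\<theta>::'a) \<noteq> 0"
  shows "S_theta q \<theta> = (\<lambda>t. pt (t,1,0)) ` {t. normq q t = normq q \<theta>}"
proof (intro set_eqI iffI)
  fix P assume "P \<in> S_theta q \<theta>"
  then obtain x where x: "x \<noteq> 0" "P = pt (x*\<theta>, x^q, 0)" unfolding S_theta_def by auto
  have xq: "x^q \<noteq> 0" using x by simp
  have e1: "x^q * (\<theta> * fh x) = x*\<theta>" unfolding fh_def using xq by (simp add: field_simps)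
  have "pt (x^q * (\<theta> * fh x), x^q * 1, x^q * 0) = pt (\<theta> * fh x, 1, 0)" using xq by (rule pt_scale)
  then have P: "P = pt (\<theta> * fh x, 1, 0)" using x(2) e1 by simp
  have "fh x \<in> U" using fh_U x unfolding G_def by auto
  then have "normq q (\<theta> * fh x) = normq q \<theta>" unfolding U_def by (simp add: N_mult)
  then show "P \<in> (\<lambda>t. pt (t,1,0)) ` {t. normq q t = normq q \<theta>}" using P by blast
next
  fix P assume "P \<in> (\<lambda>t. pt (t,1,0)) ` {t. normq q t = normq q \<theta>}"
  then obtain t where t: "P = pt (t,1,0)" "normq q t = normq q \<theta>" by auto
  have "normq q (t/\<theta>) = 1" using t th by (simp add: N_div N_zero_iff)
  then have "t/\<theta> \<in> fh ` G" using big_count unfolding U_def by auto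
  then obtain x where x: "x \<noteq> 0" "t/\<theta> = x / x^q" unfolding G_def fh_def by auto
  have xq: "x^q \<noteq> 0" using x by simp
  have tt: "t = \<theta> * (x / x^q)" using x th by (simp add: field_simps)
  have e1: "x^q * (\<theta> * (x / x^q)) = x*\<theta>" using xq by (simp add: field_simps)
  have "pt (x^q * (\<theta> * (x / x^q)), x^q * 1, x^q * 0) = pt (\<theta> * (x / x^q), 1, 0)" using xq by (rule pt_scale)
  then have "P = pt (x*\<theta>, x^q, 0)" using t(1) tt e1 by simp
  then show "P \<in> S_theta q \<theta>" unfolding S_theta_def using x by blast
qed


lemma q0': "q > 0" using q1 by simp

lemma zq2: "(0::'a)^q = 0" using q1 by simp

lemma Fq_pow: "c \<in> Fq \<Longrightarrow> c^(q-1) = 1"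
proof -
  assume "c \<in> Fq"
  then have c: "c \<noteq> 0" "c^q = c" unfolding Fq_def by auto
  obtain m where m: "q = Suc m" using q1 gr0_conv_Suc by (metis less_trans zero_less_one)
  then have "c^q = c * c^(q-1)" by simp
  then have "c * c^(q-1) = c * 1" using c by simp
  then show "c^(q-1) = 1" using c(1) by simp
qed

lemma N_in_Fq: "(s::'a) \<noteq> 0 \<Longrightarrow> normq q s \<in> Fq"
  unfolding Fq_def by (simp add: N_zero_iff N_frob)

lemma t_form:
  assumes s: "(s::'a) \<noteq> 0"
  shows "normq q (s^q*(s^q)^q) = (normq q s)^2"
proof -
  have "s^q*(s^q)^q = normq q s / s" using s by (rule N_sq_form)
  then have "normq q (s^q*(s^q)^q) = normq q (normq q s) / normq q s" by (simp add: N_div)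
  also have "normq q (normq q s) = (normq q s)^3" using N_frob[of s] by (rule N_Fq)
  finally show ?thesis using s N_zero_iff[of s] by (simp add: power2_eq_square power3_eq_cube)
qed

lemma build_s:
  assumes t: "(t::'a) \<noteq> 0" and c: "c \<in> Fq" and Nt: "normq q t = c^2"
  shows "normq q (c/t) = c \<and> (c/t)^q*((c/t)^q)^q = t"
proof -
  have c0: "c \<noteq> 0" "c^q = c" using c Fq_def by auto
  have "normq q (c/t) = c^3 / c^2" using c0 Nt by (simp add: N_div N_Fq)
  also have "\<dots> = c" using c0 by (simp add: power2_eq_square power3_eq_cube)
  finally have N: "normq q (c/t) = c" .
  have "c/t \<noteq> 0" using c0 t by simp
  then have "(c/t)^q*((c/t)^q)^q = normq q (c/t) / (c/t)" by (rule N_sq_form)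
  also have "\<dots> = t" using N c0 t by simp
  finally show ?thesis using N by simp
qed

context
  assumes oq: "odd q"
begin

lemma two_nz: "(2::'a) \<noteq> 0" using char2_iff[OF cardU] oq by simp

lemma one_ne: "(1::'a) \<noteq> -1"
proof
  assume "(1::'a) = -1"
  then have "(1::'a) + 1 = -1 + 1" by simp
  then have "(2::'a) = 0" by simp
  then show False using two_nz by simp
qed

lemma m1_Fq: "(-1::'a) \<in> Fq" unfolding Fq_def using oq by simp

lemma N_m1: "normq q (-1::'a) = -1"
proof -
  have "odd (q^2+q+1)" using oq by simp
  then show ?thesis unfolding normq_def by simp
qed

definition Sq :: "'a set" where "Sq = (\<lambda>c. c^2) ` Fq"

lemma nz_sq_iff: "nz_square_Fq q a \<longleftrightarrow> a \<in> Sq"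
  unfolding nz_square_Fq_def Sq_def Fq_def by auto

lemma card_Sq: "card Sq = (q - 1) div 2"
proof -
  have e: "card Fq = card ((\<lambda>c. c^2) ` Fq) * card {c\<in>Fq. c^2 = 1}"
    by (rule hom_card) (auto simp: Fq_def power_mult_distrib power_inverse)
  have k: "{c\<in>Fq. c^2 = 1} = {1, -1}" using m1_Fq by (auto simp: Fq_def power2_eq_1_iff)
  have "card {1, -1::'a} = 2" using one_ne by simp
  then have "q - 1 = card Sq * 2" using e k big_count unfolding Sq_def by simp
  then show ?thesis by simp
qed

lemma Sq_char: "Sq = {x. x^((q-1) div 2) = 1}"
proof -
  have h2: "2 * ((q-1) div 2) = q - 1" using oq by simp
  have h0: "(q-1) div 2 > 0" using oq q1 by presburger
  have sub: "Sq \<subseteq> {x. x^((q-1) div 2) = 1}"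
  proof
    fix y assume "y \<in> Sq"
    then obtain c where c: "c \<in> Fq" "y = c^2" unfolding Sq_def by auto
    have "y^((q-1) div 2) = c^(2 * ((q-1) div 2))" using c(2) by (simp add: power_mult)
    also have "\<dots> = 1" using h2 Fq_pow[OF c(1)] by simp
    finally show "y \<in> {x. x^((q-1) div 2) = 1}" by simp
  qed
  have "card {x::'a. x^((q-1) div 2) = 1} \<le> card Sq" using roots_pow_bound[OF h0] card_Sq by simp
  moreover have "card Sq \<le> card {x::'a. x^((q-1) div 2) = 1}" using sub by (intro card_mono) auto
  ultimately have "card Sq = card {x::'a. x^((q-1) div 2) = 1}" by linarith
  then show ?thesis using sub by (intro card_subset_eq) auto
qed

lemma m1_Sq_iff: "(-1::'a) \<in> Sq \<longleftrightarrow> q mod 4 = 1"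
proof -
  have "(-1::'a) \<in> Sq \<longleftrightarrow> (-1::'a)^((q-1) div 2) = 1" using Sq_char by simp
  also have "\<dots> \<longleftrightarrow> even ((q-1) div 2)" using one_ne by (auto simp: minus_one_power_iff)
  also have "\<dots> \<longleftrightarrow> q mod 4 = 1" using oq by presburger
  finally show ?thesis .
qed

lemma K_odd: "(\<exists>s. normq q s \<noteq> -1 \<and> t = s^q*(s^q)^q) \<longleftrightarrow> (t = 0 \<or> normq q (t::'a) \<in> Sq)"
proof
  assume "\<exists>s. normq q s \<noteq> -1 \<and> t = s^q*(s^q)^q"
  then obtain s where s: "normq q s \<noteq> -1" "t = s^q*(s^q)^q" by blast
  show "t = 0 \<or> normq q t \<in> Sq"
  proof (cases "s = 0")
    case True then show ?thesis using s zq2 by simp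
  next
    case False
    have "normq q t = (normq q s)^2" using s(2) t_form[OF False] by simp
    then show ?thesis using N_in_Fq[OF False] unfolding Sq_def by auto
  qed
next
  assume "t = 0 \<or> normq q t \<in> Sq"
  then show "\<exists>s. normq q s \<noteq> -1 \<and> t = s^q*(s^q)^q"
  proof
    assume "t = 0" then show ?thesis using zq2 N_zero by (intro exI[of _ 0]) simp
  next
    assume "normq q t \<in> Sq"
    then obtain c where c: "c \<in> Fq" "normq q t = c^2" unfolding Sq_def by auto
    define c' where "c' = (if c = -1 then 1 else c)"
    have c'F: "c' \<in> Fq" unfolding c'_def using c(1) by (simp add: Fq_def)
    have c'2: "normq q t = c'^2" unfolding c'_def using c(2) by simp
    have c'm: "c' \<noteq> -1" unfolding c'_def using one_ne by simp
    have t0: "t \<noteq> 0" using c'2 c'F N_zero unfolding Fq_def by auto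
    show ?thesis using build_s[OF t0 c'F c'2] c'm by (intro exI[of _ "c'/t"]) simp
  qed
qed

lemma card_A3: "card {t::'a. normq q t \<in> Sq} = (q - 1) div 2 * (q^2+q+1)"
proof -
  have "{t::'a. normq q t \<in> Sq} = (\<Union>c\<in>Sq. {t. normq q t = c})" by auto
  moreover have "card (\<Union>c\<in>Sq. {t::'a. normq q t = c}) = (\<Sum>c\<in>Sq. card {t::'a. normq q t = c})"
    by (rule card_UN_disjoint) auto
  moreover have "(\<Sum>c\<in>Sq. card {t::'a. normq q t = c}) = (\<Sum>c\<in>Sq. q^2+q+1)"
  proof (rule sum.cong)
    fix c assume "c \<in> Sq"
    then obtain d where d: "d \<in> Fq" "c = d^2" unfolding Sq_def by auto
    then have "c^q = (d^q)^2" using pow_comm by metis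
    then have "c \<in> Fq" using d unfolding Fq_def by simp
    then show "card {t::'a. normq q t = c} = q^2+q+1" by (rule N_fiber)
  qed simp
  ultimately show ?thesis using card_Sq by simp
qed

end

context
  assumes eq: "even q"
begin

lemma two_z: "(2::'a) = 0" using char2_iff[OF cardU] eq by simp

lemma m1_one: "(-1::'a) = 1"
proof -
  have "(1::'a) + 1 = 0" using two_z by simp
  then show ?thesis by (simp add: eq_neg_iff_add_eq_0)
qed

lemma sq_inj2: "(x::'a)^2 = y^2 \<Longrightarrow> x = y"
proof -
  assume h: "x^2 = y^2"
  have "(x-y)^2 = x^2 - y^2 + 2*(y^2 - x*y)" by (simp add: power2_eq_square algebra_simps)
  also have "\<dots> = 0" using h two_z by simp
  finally show "x = y" by simp
qed

lemma K_even: "normq q (t::'a) = -1 \<or> (\<exists>s. normq q s \<noteq> -1 \<and> t = s^q*(s^q)^q)"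
proof (cases "t = 0")
  case True then show ?thesis using zq2 N_zero m1_one by (intro disjI2 exI[of _ 0]) simp
next
  case False
  show ?thesis
  proof (cases "normq q t = -1")
    case True then show ?thesis by simp
  next
    case Nt: False
    define c where "c = (normq q t)^(q^3 div 2)"
    have ev3: "2 * (q^3 div 2) = q^3" using eq by simp
    have ev3': "(q^3 div 2) * 2 = q^3" using ev3 by simp
    have c2: "c^2 = normq q t" unfolding c_def power_mult[symmetric] ev3' by (rule frobA)
    have "(c^q)^2 = (c^2)^q" by (rule pow_comm)
    also have "\<dots> = c^2" using c2 N_frob by simp
    finally have cq: "c^q = c" by (rule sq_inj2)
    have c0: "c \<noteq> 0"
    proof
      assume "c = 0"
      then have "normq q t = 0" using c2 by simp
      then show False using False N_zero_iff[of t] by simp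
    qed
    have cF: "c \<in> Fq" using c0 cq Fq_def by simp
    have cm: "c \<noteq> -1"
    proof
      assume "c = -1"
      then have "c^2 = 1" by simp
      then have "normq q t = 1" using c2 by simp
      then show False using Nt m1_one by simp
    qed
    show ?thesis using build_s[OF False cF c2[symmetric]] cm by (intro disjI2 exI[of _ "c/t"]) simp
  qed
qed

end

end



lemma ell_inj: "inj (\<lambda>t::'a::field. pt (t,1,0))"
  by (auto simp: inj_def pt_eq_iff)

lemma ell_ne: "pt (1,0,0) \<noteq> (pt (t,1,0) :: 'a::field vec3 set)"
  by (simp add: pt_eq_iff)

lemma pts_on_mT: "pts_on (mT :: 'a::field vec3 set) = {pt (1,0,0)} \<union> range (\<lambda>t. pt (t,1,0))"
proof (intro set_eqI iffI)
  fix P :: "'a vec3 set" assume "P \<in> pts_on mT"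
  then have "P \<in> points" "incid P (pt (0,0,1))" unfolding pts_on_def mT_def by auto
  then show "P \<in> {pt (1,0,0)} \<union> range (\<lambda>t. pt (t,1,0))" using on_mT by blast
next
  fix P :: "'a vec3 set" assume "P \<in> {pt (1,0,0)} \<union> range (\<lambda>t. pt (t,1,0))"
  then show "P \<in> pts_on mT" unfolding pts_on_def mT_def by (auto simp: in_points incid_pt)
qed

theorem theorem6p1:
  fixes p n q :: nat and T :: "('a::{field,finite}) vec3 set"
  assumes "prime p" and "n > 0" and "q = p ^ n"
    and "card (UNIV :: 'a set) = q ^ 3" and "T = Tpt"
  shows "(even q \<longrightarrow> Pr ` Fig q T = pts_on mT)
       \<and> (odd q \<longrightarrow>
            Pr ` Fig q T =
              {phi q T, phi q (phi q T)} \<union> S_theta q (-1) \<union>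
              \<Union> {S_theta q \<theta> | \<theta>. \<theta> \<noteq> 0 \<and> nz_square_Fq q (normq q \<theta>)}
          \<and> (q mod 4 = 1 \<longrightarrow>
               card (Pr ` Fig q T) = 2 + (q - 1) div 2 * (q^2 + q + 1))
          \<and> (q mod 4 = 3 \<longrightarrow>
               card (Pr ` Fig q T) = 2 + (q + 1) div 2 * (q^2 + q + 1)))"
proof -
  have p1: "p > 1" using assms(1) by (rule prime_gt_1_nat)
  have q1: "q > 1" unfolding assms(3) using p1 assms(2) by (rule one_less_power)
  have cU: "card (UNIV :: 'a set) = q ^ 3" by (rule assms(4))
  have q0: "q > 0" using q1 by simp
  have frob: "\<And>x::'a. x ^ (q^3) = x" using frobA[OF q1 cU] .
  let ?l = "\<lambda>t::'a. pt (t,1,0)"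
  define A1 where "A1 = {t::'a. normq q t = -1}"
  define A2 where "A2 = {t::'a. \<exists>s. normq q s \<noteq> -1 \<and> t = s^q*(s^q)^q}"
  have R: "Pr ` Fig q T = {pt (1,0,0)} \<union> ?l ` (A1 \<union> A2)"
    unfolding assms(5) Pr_Fig[OF q0 frob] A1_def A2_def by blast
  show ?thesis
  proof (rule conjI)
    show "even q \<longrightarrow> Pr ` Fig q T = pts_on mT"
    proof
    assume ev: "even q"
    have "A1 \<union> A2 = UNIV" unfolding A1_def A2_def using K_even[OF q1 cU ev] by blast
    then show "Pr ` Fig q T = pts_on mT" unfolding R pts_on_mT by simp
    qed
  next
    show "odd q \<longrightarrow>
            Pr ` Fig q T =
              {phi q T, phi q (phi q T)} \<union> S_theta q (-1) \<union>
              \<Union> {S_theta q \<theta> | \<theta>. \<theta> \<noteq> 0 \<and> nz_square_Fq q (normq q \<theta>)}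
          \<and> (q mod 4 = 1 \<longrightarrow>
               card (Pr ` Fig q T) = 2 + (q - 1) div 2 * (q^2 + q + 1))
          \<and> (q mod 4 = 3 \<longrightarrow>
               card (Pr ` Fig q T) = 2 + (q + 1) div 2 * (q^2 + q + 1))"
    proof
    assume od: "odd q"
    let ?Sq = "Sq q :: 'a set"
    define A3 where "A3 = {t::'a. normq q t \<in> ?Sq}"
    have A2: "A2 = {0} \<union> A3" unfolding A2_def A3_def using K_odd[OF q1 cU od] by blast
    have R2: "Pr ` Fig q T = {pt (1,0,0)} \<union> ?l ` ({0} \<union> (A1 \<union> A3))"
      unfolding R A2 by (simp add: Un_ac)
    have Sq0: "(0::'a) \<notin> ?Sq" unfolding Sq_def[OF q1 cU od] Fq_def[OF q1 cU] by auto
    have nA: "0 \<notin> A1 \<union> A3" unfolding A1_def A3_def using Sq0 N_zero[OF q1 cU] by simp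
    have phT: "{phi q T, phi q (phi q T)} = {pt (1,0,0), pt (0,1,0)}"
      unfolding assms(5) using phiT[OF q0 frob] by simp
    have Sm1: "S_theta q (-1::'a) = ?l ` A1"
    proof -
      have m10: "(-1::'a) \<noteq> 0" by simp
      show ?thesis unfolding S_theta_eq[OF q1 cU m10] N_m1[OF q1 cU od] A1_def ..
    qed
    have SU: "\<Union> {S_theta q \<theta> | \<theta>::'a. \<theta> \<noteq> 0 \<and> nz_square_Fq q (normq q \<theta>)} = ?l ` A3"
    proof (intro set_eqI iffI)
      fix P assume "P \<in> \<Union> {S_theta q \<theta> | \<theta>::'a. \<theta> \<noteq> 0 \<and> nz_square_Fq q (normq q \<theta>)}"
      then obtain \<theta> where th: "\<theta> \<noteq> 0" "normq q \<theta> \<in> ?Sq" "P \<in> S_theta q \<theta>"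
        using nz_sq_iff[OF q1 cU od] by blast
      then obtain t where "P = ?l t" "normq q t = normq q \<theta>" using S_theta_eq[OF q1 cU th(1)] by auto
      then show "P \<in> ?l ` A3" unfolding A3_def using th(2) by auto
    next
      fix P assume "P \<in> ?l ` A3"
      then obtain t where t: "P = ?l t" "normq q t \<in> ?Sq" unfolding A3_def by auto
      have t0: "t \<noteq> 0" using t(2) Sq0 N_zero[OF q1 cU] by auto
      have "P \<in> S_theta q t" using S_theta_eq[OF q1 cU t0] t(1) by auto
      then show "P \<in> \<Union> {S_theta q \<theta> | \<theta>::'a. \<theta> \<noteq> 0 \<and> nz_square_Fq q (normq q \<theta>)}"
        using t0 t(2) nz_sq_iff[OF q1 cU od] by blast
    qed
    have G1: "Pr ` Fig q T = {phi q T, phi q (phi q T)} \<union> S_theta q (-1) \<union>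
              \<Union> {S_theta q \<theta> | \<theta>. \<theta> \<noteq> 0 \<and> nz_square_Fq q (normq q \<theta>)}"
      unfolding R2 phT Sm1 SU by auto
    have fin: "finite (A1 \<union> A3)" by simp
    have cardR: "card (Pr ` Fig q T) = 2 + card (A1 \<union> A3)"
    proof -
      define B where "B = ?l ` ({0} \<union> (A1 \<union> A3))"
      have nb: "pt (1,0,0) \<notin> B" unfolding B_def using ell_ne by auto
      have fB: "finite B" by simp
      have "Pr ` Fig q T = insert (pt (1,0,0)) B" unfolding R2 B_def by (simp add: insert_commute)
      then have "card (Pr ` Fig q T) = Suc (card B)" using card_insert_disjoint[OF fB nb] by simp
      also have "card B = card ({0} \<union> (A1 \<union> A3))"
        unfolding B_def by (rule card_image[OF inj_on_subset[OF ell_inj subset_UNIV]])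
      also have "card ({0} \<union> (A1 \<union> A3)) = Suc (card (A1 \<union> A3))"
        using nA fin by simp
      finally show ?thesis by simp
    qed
    have cA3: "card A3 = (q - 1) div 2 * (q^2+q+1)"
      unfolding A3_def by (rule card_A3[OF q1 cU od])
    have G2: "q mod 4 = 1 \<longrightarrow> card (Pr ` Fig q T) = 2 + (q - 1) div 2 * (q^2 + q + 1)"
    proof
      assume "q mod 4 = 1"
      then have "(-1::'a) \<in> ?Sq" using m1_Sq_iff[OF q1 cU od] by simp
      then have "A1 \<subseteq> A3" unfolding A1_def A3_def by auto
      then have "A1 \<union> A3 = A3" by auto
      then show "card (Pr ` Fig q T) = 2 + (q - 1) div 2 * (q^2 + q + 1)" using cardR cA3 by simp
    qed
    have G3: "q mod 4 = 3 \<longrightarrow> card (Pr ` Fig q T) = 2 + (q + 1) div 2 * (q^2 + q + 1)"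
    proof
      assume q3: "q mod 4 = 3"
      then have "(-1::'a) \<notin> ?Sq" using m1_Sq_iff[OF q1 cU od] by simp
      then have dj: "A1 \<inter> A3 = {}" unfolding A1_def A3_def by auto
      have cA1: "card A1 = q^2+q+1" unfolding A1_def by (rule N_fiber[OF q1 cU m1_Fq[OF q1 cU od]])
      have "card (A1 \<union> A3) = card A1 + card A3" using dj by (simp add: card_Un_disjoint)
      also have "\<dots> = (q + 1) div 2 * (q^2+q+1)" using cA1 cA3 od
      proof -
        have "(q + 1) div 2 = (q - 1) div 2 + 1" using od q1 by presburger
        then show ?thesis using cA1 cA3 by (simp add: algebra_simps)
      qed
      finally show "card (Pr ` Fig q T) = 2 + (q + 1) div 2 * (q^2 + q + 1)" using cardR by simp
    qed
    show "Pr ` Fig q T =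
              {phi q T, phi q (phi q T)} \<union> S_theta q (-1) \<union>
              \<Union> {S_theta q \<theta> | \<theta>. \<theta> \<noteq> 0 \<and> nz_square_Fq q (normq q \<theta>)}
          \<and> (q mod 4 = 1 \<longrightarrow>
               card (Pr ` Fig q T) = 2 + (q - 1) div 2 * (q^2 + q + 1))
          \<and> (q mod 4 = 3 \<longrightarrow>
               card (Pr ` Fig q T) = 2 + (q + 1) div 2 * (q^2 + q + 1))"
      using G1 G2 G3 by blast
    qed
  qed
qed


end
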